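(* Let $f:\mathbb{R}^{n+1}\to\mathbb{R}_n$ be an entire slice monogenic function. Then the series $$\sum_{k\ge 0}\frac{1}{k!}(f(x))^{*k}$$ converges uniformly on compact subsets of $\mathbb{R}^{n+1}$ and defines a slice monogenic function on $\mathbb{R}^{n+1}$.
   Context: $\mathbb{R}_n$ is the real Clifford algebra generated by $e_1,\dots,e_n$ with $e_ie_j+e_je_i=-2\delta_{ij}$; paravectors $x=x_0+x_1e_1+\dots+x_ne_n$ are identified with $\mathbb{R}^{n+1}$. $\mathbb{S}^{n-1}=\{\omega=a_1e_1+\dots+a_ne_n: \sum a_i^2=1\}$ (so $\omega^2=-1$), and $\mathbb{C}_\omega=\{u+\omega v: u,v\in\mathbb{R}\}$. A function $f$ on an axially symmetric open set $U$ is slice monogenic if $f(u+\omega v)=\alpha(u,v)+\omega\beta(u,v)$ for all $\omega\in\mathbb{S}^{n-1}$, with $\mathbb{R}_n$-valued differentiable $\alpha,\beta$ satisfying $\alpha(u,-v)=\alpha(u,v)$, $\beta(u,-v)=-\beta(u,v)$ and $\partial_u\alpha-\partial_v\beta=0$, $\partial_u\beta+\partial_v\alpha=0$. For slice monogenic $f=\alpha+\omega\beta$, $g=\gamma+\omega\delta$, the $*$-product is $(f*g)(u+\omega v)=(\alpha\gamma-\beta\delta)+\omega(\beta\gamma+\alpha\delta)$, and $f^{*k}$ is the $k$-fold $*$-product ($f^{*0}=1$). *)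

theory Defs
  imports "HOL-Analysis.Analysis"
begin

text \<open>The generators e_1,...,e_n are indexed by a
finite linearly ordered type 'n (so n = CARD('n) >= 1).  An element of R_n is a real
vector indexed by subsets A of the generators (coefficient of the blade e_A, where
e_A is the ordered product of the e_i, i in A, in increasing order).  The norm is the
Euclidean norm of the coefficient vector.\<close>

type_synonym 'n clif = "real ^ ('n set)"

text \<open>Sign in e_A e_B = bsign A B e_(A symdiff B), using e_i e_j = - e_j e_i (i ~= j)
and e_i e_i = -1.\<close>
definition bsign :: "'n::{finite,linorder} set \<Rightarrow> 'n::{finite,linorder} set \<Rightarrow> real" where
  "bsign A B = (-1) ^ (card {(a, b). a \<in> A \<and> b \<in> B \<and> b < a} + card (A \<inter> B))"

definition cmul :: "'n::{finite,linorder} clif \<Rightarrow> 'n::{finite,linorder} clif \<Rightarrow> 'n::{finite,linorder} clif" where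
  "cmul x y = (\<chi> C. \<Sum>A\<in>UNIV. \<Sum>B\<in>UNIV.
      if (A - B) \<union> (B - A) = C then bsign A B * (x $ A) * (y $ B) else 0)"

definition cone :: "'n::{finite,linorder} clif" where
  "cone = (\<chi> A. if A = {} then 1 else 0)"

definition gen :: "'n::{finite,linorder} \<Rightarrow> 'n::{finite,linorder} clif" where
  "gen i = (\<chi> A. if A = {i} then 1 else 0)"

text \<open>Paravectors: R^(n+1) is represented as real \<times> real^'n::{finite,linorder}, the point (x0, x)
corresponding to x0 + sum_i x_i e_i.  The unit sphere S^(n-1) consists of the
elements omega a = sum_i a_i e_i with a in real^'n::{finite,linorder}, norm a = 1.\<close>

definition omega :: "real ^ ('n::{finite,linorder}) \<Rightarrow> 'n::{finite,linorder} clif" where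
  "omega a = (\<Sum>i\<in>UNIV. (a $ i) *\<^sub>R gen i)"

definition slice_rep ::
  "(real \<times> (real ^ ('n::{finite,linorder})) \<Rightarrow> 'n::{finite,linorder} clif) \<Rightarrow>
   (real \<times> real \<Rightarrow> 'n::{finite,linorder} clif) \<Rightarrow> (real \<times> real \<Rightarrow> 'n::{finite,linorder} clif) \<Rightarrow> bool" where
  "slice_rep f \<alpha> \<beta> \<longleftrightarrow>
     (\<forall>u v a. norm a = 1 \<longrightarrow> f (u, v *\<^sub>R a) = \<alpha> (u, v) + cmul (omega a) (\<beta> (u, v))) \<and>
     (\<forall>u v. \<alpha> (u, -v) = \<alpha> (u, v)) \<and>
     (\<forall>u v. \<beta> (u, -v) = - \<beta> (u, v)) \<and>
     (\<exists>D\<alpha> D\<beta>. \<forall>p. (\<alpha> has_derivative D\<alpha> p) (at p) \<and> (\<beta> has_derivative D\<beta> p) (at p) \<and>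
        D\<alpha> p (1, 0) - D\<beta> p (0, 1) = 0 \<and> D\<beta> p (1, 0) + D\<alpha> p (0, 1) = 0)"

definition slice_monogenic :: "(real \<times> (real ^ ('n::{finite,linorder})) \<Rightarrow> 'n::{finite,linorder} clif) \<Rightarrow> bool" where
  "slice_monogenic f \<longleftrightarrow> (\<exists>\<alpha> \<beta>. slice_rep f \<alpha> \<beta>)"

text \<open>The (unique) components of a slice monogenic function.\<close>
definition slice_comps ::
  "(real \<times> (real ^ ('n::{finite,linorder})) \<Rightarrow> 'n::{finite,linorder} clif) \<Rightarrow>
   (real \<times> real \<Rightarrow> 'n::{finite,linorder} clif) \<times> (real \<times> real \<Rightarrow> 'n::{finite,linorder} clif)" where
  "slice_comps f = (SOME (\<alpha>, \<beta>). slice_rep f \<alpha> \<beta>)"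

text \<open>The function x = u + omega v |-> alpha(u,v) + omega beta(u,v), using the
decomposition u = x0, v = |x|, omega = x/|x| (for x = 0 the omega-term is 0,
consistent with beta(u,0) = 0).\<close>
definition slice_fun ::
  "(real \<times> real \<Rightarrow> (real ^ ('n::{finite,linorder} set))) \<Rightarrow> (real \<times> real \<Rightarrow> 'n::{finite,linorder} clif) \<Rightarrow>
   real \<times> (real ^ ('n::{finite,linorder})) \<Rightarrow> 'n::{finite,linorder} clif" where
  "slice_fun \<alpha> \<beta> x = \<alpha> (fst x, norm (snd x)) + cmul (omega (sgn (snd x))) (\<beta> (fst x, norm (snd x)))"

definition star ::
  "(real \<times> (real ^ ('n::{finite,linorder})) \<Rightarrow> 'n::{finite,linorder} clif) \<Rightarrow>
   (real \<times> (real ^ 'n::{finite,linorder}) \<Rightarrow> 'n::{finite,linorder} clif) \<Rightarrow> real \<times> (real ^ 'n::{finite,linorder}) \<Rightarrow> 'n::{finite,linorder} clif" where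
  "star f g =
     (let (\<alpha>, \<beta>) = slice_comps f; (\<gamma>, \<delta>) = slice_comps g in
      slice_fun (\<lambda>p. cmul (\<alpha> p) (\<gamma> p) - cmul (\<beta> p) (\<delta> p))
                (\<lambda>p. cmul (\<beta> p) (\<gamma> p) + cmul (\<alpha> p) (\<delta> p)))"

fun star_pow ::
  "(real \<times> (real ^ ('n::{finite,linorder})) \<Rightarrow> 'n::{finite,linorder} clif) \<Rightarrow> nat \<Rightarrow> real \<times> (real ^ 'n::{finite,linorder}) \<Rightarrow> 'n::{finite,linorder} clif" where
  "star_pow f 0 = (\<lambda>x. cone)"
| "star_pow f (Suc k) = star f (star_pow f k)"

end

theory Submission imports Defs "HOL-Complex_Analysis.Complex_Analysis" begin

lemma cmul_add_left: "cmul (x + y) z = cmul x z + cmul y z"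
  unfolding cmul_def by (simp add: vec_eq_iff sum.distrib[symmetric] sum_distrib_left, intro allI sum.cong refl, auto simp: algebra_simps)
lemma cmul_add_right: "cmul z (x + y) = cmul z x + cmul z y"
  unfolding cmul_def by (simp add: vec_eq_iff sum.distrib[symmetric] sum_distrib_left, intro allI sum.cong refl, auto simp: algebra_simps)
lemma cmul_scale_left: "cmul (c *\<^sub>R x) z = c *\<^sub>R cmul x z"
  unfolding cmul_def by (simp add: vec_eq_iff sum.distrib[symmetric] sum_distrib_left, intro allI sum.cong refl, auto simp: algebra_simps)
lemma cmul_scale_right: "cmul z (c *\<^sub>R x) = c *\<^sub>R cmul z x"
  unfolding cmul_def by (simp add: vec_eq_iff sum.distrib[symmetric] sum_distrib_left, intro allI sum.cong refl, auto simp: algebra_simps)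

lemma bilinear_cmul: "bilinear cmul"
  unfolding bilinear_def linear_iff by (simp add: cmul_add_left cmul_add_right cmul_scale_left cmul_scale_right)
lemma bb_cmul: "bounded_bilinear cmul"
  using bilinear_cmul bilinear_conv_bounded_bilinear by blast

interpretation cm: bounded_bilinear cmul by (rule bb_cmul)

lemma "cmul 0 x = 0" "cmul x 0 = 0" "cmul (-x) y = - cmul x y" "cmul x (y - z) = cmul x y - cmul x z"
  by (simp_all add: cm.zero_left cm.zero_right cm.minus_left cm.diff_right)

lemma bsign_nz: "bsign A B \<noteq> 0" unfolding bsign_def by simp

lemma cmul_gen: "cmul (gen i) y $ C = bsign {i} (sym_diff C {i}) * y $ (sym_diff C {i})"
proof -
  have "cmul (gen i) y $ C = (\<Sum>A\<in>UNIV. if A = {i} then (\<Sum>B\<in>UNIV. if sym_diff A B = C then bsign A B * y $ B else 0) else 0)"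
    unfolding cmul_def gen_def vec_lambda_beta by (intro sum.cong refl) (simp cong: if_cong)
  also have "\<dots> = (\<Sum>B\<in>UNIV. if sym_diff {i} B = C then bsign {i} B * y $ B else 0)"
    by (simp add: sum.delta)
  also have "\<dots> = (\<Sum>B\<in>UNIV. if B = sym_diff C {i} then bsign {i} B * y $ B else 0)"
    by (intro sum.cong refl) auto
  also have "\<dots> = bsign {i} (sym_diff C {i}) * y $ (sym_diff C {i})"
    by (simp add: sum.delta)
  finally show ?thesis .
qed

lemma cmul_gen_inj: assumes "cmul (gen i) y = 0" shows "y = 0"
proof -
  have "y $ B = 0" for B
  proof -
    have "cmul (gen i) y $ (sym_diff B {i}) = 0" using assms by simp
    moreover have "sym_diff (sym_diff B {i}) {i} = B" by auto
    ultimately have "bsign {i} B * y $ B = 0" by (simp add: cmul_gen)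
    then show ?thesis using bsign_nz[of "{i}" B] by simp
  qed
  then show ?thesis by (simp add: vec_eq_iff)
qed

lemma omega_axis: "omega (axis i 1) = gen i"
  proof -
  have "omega (axis i 1) = (\<Sum>j\<in>UNIV. if j = i then gen j else 0)"
    unfolding omega_def axis_def by (intro sum.cong refl) auto
  then show ?thesis by (simp add: sum.delta')
qed

lemma linear_omega: "linear omega"
  unfolding omega_def linear_iff by (simp add: sum.distrib scaleR_add_left scaleR_sum_right)

lemma omega_minus: "omega (- a) = - omega a" using linear_omega by (rule linear_neg)
lemma omega_zero: "omega 0 = 0" using linear_omega by (rule linear_0)


lemma omega_scale: "omega (c *\<^sub>R a) = c *\<^sub>R omega a"
  unfolding omega_def by (simp add: scaleR_sum_right)

lemma slice_rep_alpha:
  assumes "slice_rep f \<alpha> \<beta>"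
  shows "\<alpha> (u, v) = (1/2) *\<^sub>R (f (u, v *\<^sub>R axis i 1) + f (u, (-v) *\<^sub>R axis i 1))"
    and "cmul (gen i) (\<beta> (u, v)) = (1/2) *\<^sub>R (f (u, v *\<^sub>R axis i 1) - f (u, (-v) *\<^sub>R axis i 1))"
proof -
  have r: "\<And>u v a. norm a = 1 \<Longrightarrow> f (u, v *\<^sub>R a) = \<alpha> (u, v) + cmul (omega a) (\<beta> (u, v))"
    and e: "\<And>u v. \<alpha> (u, -v) = \<alpha> (u, v)" and o: "\<And>u v. \<beta> (u, -v) = - \<beta> (u, v)"
    using assms unfolding slice_rep_def by auto
  have 1: "f (u, v *\<^sub>R axis i 1) = \<alpha> (u, v) + cmul (gen i) (\<beta> (u, v))"
    using r[of "axis i 1" u v] by (simp add: omega_axis)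
  have 2: "f (u, (-v) *\<^sub>R axis i 1) = \<alpha> (u, v) - cmul (gen i) (\<beta> (u, v))"
    using r[of "axis i 1" u "-v"] by (simp add: omega_axis e o cm.minus_right)
  show "\<alpha> (u, v) = (1/2) *\<^sub>R (f (u, v *\<^sub>R axis i 1) + f (u, (-v) *\<^sub>R axis i 1))"
    unfolding 1 2 by (simp add: scaleR_add_right[symmetric])
  show "cmul (gen i) (\<beta> (u, v)) = (1/2) *\<^sub>R (f (u, v *\<^sub>R axis i 1) - f (u, (-v) *\<^sub>R axis i 1))"
    unfolding 1 2 by (simp add: scaleR_add_right[symmetric])
qed

lemma slice_rep_unique:
  fixes f :: "real \<times> (real^'n::{finite,linorder}) \<Rightarrow> 'n clif"
  assumes "slice_rep f \<alpha> \<beta>" "slice_rep f \<alpha>' \<beta>'"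
  shows "\<alpha> = \<alpha>' \<and> \<beta> = \<beta>'"
proof -
  fix i :: 'n
  have a: "\<alpha> p = \<alpha>' p" for p
    using slice_rep_alpha(1)[OF assms(1), where u="fst p" and v="snd p" and i=i] slice_rep_alpha(1)[OF assms(2), where u="fst p" and v="snd p" and i=i]
    by simp
  have b: "\<beta> p = \<beta>' p" for p
  proof -
    have "cmul (gen i) (\<beta> p - \<beta>' p) = 0"
      using slice_rep_alpha(2)[OF assms(1), where u="fst p" and v="snd p" and i=i] slice_rep_alpha(2)[OF assms(2), where u="fst p" and v="snd p" and i=i]
      by (simp add: cm.diff_right)
    then show ?thesis using cmul_gen_inj by fastforce
  qed
  show ?thesis using a b by auto
qed

lemma slice_comps_eq: assumes "slice_rep f \<alpha> \<beta>" shows "slice_comps f = (\<alpha>, \<beta>)"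
  unfolding slice_comps_def
proof (rule some_equality)
  show "case (\<alpha>, \<beta>) of (\<alpha>, \<beta>) \<Rightarrow> slice_rep f \<alpha> \<beta>" using assms by simp
  fix x assume "case x of (\<alpha>, \<beta>) \<Rightarrow> slice_rep f \<alpha> \<beta>"
  then show "x = (\<alpha>, \<beta>)" using slice_rep_unique[OF assms] by (cases x) auto
qed


definition CR_ok :: "(real \<times> real \<Rightarrow> 'n::{finite,linorder} clif) \<Rightarrow> (real \<times> real \<Rightarrow> 'n clif) \<Rightarrow> bool" where
  "CR_ok \<alpha> \<beta> \<longleftrightarrow> (\<exists>D\<alpha> D\<beta>. \<forall>p. (\<alpha> has_derivative D\<alpha> p) (at p) \<and> (\<beta> has_derivative D\<beta> p) (at p) \<and>
        D\<alpha> p (1, 0) - D\<beta> p (0, 1) = 0 \<and> D\<beta> p (1, 0) + D\<alpha> p (0, 1) = 0)"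

lemma slice_rep_iff: "slice_rep f \<alpha> \<beta> \<longleftrightarrow>
     (\<forall>u v a. norm a = 1 \<longrightarrow> f (u, v *\<^sub>R a) = \<alpha> (u, v) + cmul (omega a) (\<beta> (u, v))) \<and>
     (\<forall>u v. \<alpha> (u, -v) = \<alpha> (u, v)) \<and>
     (\<forall>u v. \<beta> (u, -v) = - \<beta> (u, v)) \<and> CR_ok \<alpha> \<beta>"
  unfolding slice_rep_def CR_ok_def by simp

lemma slice_fun_rep:
  fixes A B :: "real \<times> real \<Rightarrow> 'n::{finite,linorder} clif"
  assumes e: "\<And>u v. A (u, -v) = A (u, v)" and o: "\<And>u v. B (u, -v) = - B (u, v)"
    and cr: "CR_ok A B"
  shows "slice_rep (slice_fun A B) A B"
  unfolding slice_rep_iff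
proof (intro conjI allI impI)
  fix u v :: real and a :: "real^('n::{finite,linorder})" assume a: "norm a = 1"
  have n: "norm (v *\<^sub>R a) = \<bar>v\<bar>" using a by simp
  have s: "sgn (v *\<^sub>R a) = sgn v *\<^sub>R a" using a by (simp add: sgn_scaleR sgn_div_norm)
  have B0: "B (u, 0) = 0"
  proof -
    have h: "B (u, 0) = - B (u, 0)" using o[of u 0] by (metis minus_zero)
    have "B (u, 0) $ i = - (B (u, 0) $ i)" for i by (subst h) (simp only: vector_uminus_component minus_minus)
    then show ?thesis by (simp add: vec_eq_iff)
  qed
  show "slice_fun A B (u, v *\<^sub>R a) = A (u, v) + cmul (omega a) (B (u, v))"
  proof (cases "v = 0")
    case True then show ?thesis by (simp add: slice_fun_def B0 cm.zero_right)
  next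
    case False
    then consider "v > 0" | "v < 0" by linarith
    then show ?thesis
    proof cases
      case 1 then show ?thesis unfolding slice_fun_def using n s by simp
    next
      case 2 then show ?thesis unfolding slice_fun_def using n s
        by (simp add: omega_minus e o cm.minus_left cm.minus_right)
    qed
  qed
qed (use e o cr in auto)

lemma cone_rep: "slice_rep (\<lambda>x. cone) (\<lambda>p. cone) (\<lambda>p. 0)"
  unfolding slice_rep_iff CR_ok_def
  by (auto simp: cm.zero_right intro!: exI[of _ "\<lambda>p h. 0"])

lemma CR_ok_mul:
  assumes "CR_ok \<alpha> \<beta>" "CR_ok \<gamma> \<delta>"
  shows "CR_ok (\<lambda>p. cmul (\<alpha> p) (\<gamma> p) - cmul (\<beta> p) (\<delta> p)) (\<lambda>p. cmul (\<beta> p) (\<gamma> p) + cmul (\<alpha> p) (\<delta> p))"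
proof -
  obtain Da Db where ab: "\<And>p. (\<alpha> has_derivative Da p) (at p) \<and> (\<beta> has_derivative Db p) (at p) \<and>
        Da p (1, 0) - Db p (0, 1) = 0 \<and> Db p (1, 0) + Da p (0, 1) = 0"
    using assms(1) unfolding CR_ok_def by blast
  obtain Dc Dd where cd: "\<And>p. (\<gamma> has_derivative Dc p) (at p) \<and> (\<delta> has_derivative Dd p) (at p) \<and>
        Dc p (1, 0) - Dd p (0, 1) = 0 \<and> Dd p (1, 0) + Dc p (0, 1) = 0"
    using assms(2) unfolding CR_ok_def by blast
  show ?thesis unfolding CR_ok_def
  proof (intro exI allI conjI)
    fix p
    show "((\<lambda>p. cmul (\<alpha> p) (\<gamma> p) - cmul (\<beta> p) (\<delta> p)) has_derivative
      (\<lambda>h. (cmul (\<alpha> p) (Dc p h) + cmul (Da p h) (\<gamma> p)) - (cmul (\<beta> p) (Dd p h) + cmul (Db p h) (\<delta> p)))) (at p)"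
      by (intro has_derivative_diff cm.FDERIV) (use ab cd in auto)
    show "((\<lambda>p. cmul (\<beta> p) (\<gamma> p) + cmul (\<alpha> p) (\<delta> p)) has_derivative
      (\<lambda>h. (cmul (\<beta> p) (Dc p h) + cmul (Db p h) (\<gamma> p)) + (cmul (\<alpha> p) (Dd p h) + cmul (Da p h) (\<delta> p)))) (at p)"
      by (intro has_derivative_add cm.FDERIV) (use ab cd in auto)
    have 1: "Db p (0,1) = Da p (1,0)" "Da p (0,1) = - Db p (1,0)" 
      "Dd p (0,1) = Dc p (1,0)" "Dc p (0,1) = - Dd p (1,0)" using ab[of p] cd[of p] by (auto simp: eq_neg_iff_add_eq_0 add.commute)
    show "(cmul (\<alpha> p) (Dc p (1, 0)) + cmul (Da p (1, 0)) (\<gamma> p)) - (cmul (\<beta> p) (Dd p (1, 0)) + cmul (Db p (1, 0)) (\<delta> p)) -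
        ((cmul (\<beta> p) (Dc p (0, 1)) + cmul (Db p (0, 1)) (\<gamma> p)) + (cmul (\<alpha> p) (Dd p (0, 1)) + cmul (Da p (0, 1)) (\<delta> p))) = 0"
      unfolding 1 by (simp add: cm.minus_left cm.minus_right algebra_simps)
    show "(cmul (\<beta> p) (Dc p (1, 0)) + cmul (Db p (1, 0)) (\<gamma> p)) + (cmul (\<alpha> p) (Dd p (1, 0)) + cmul (Da p (1, 0)) (\<delta> p)) +
        ((cmul (\<alpha> p) (Dc p (0, 1)) + cmul (Da p (0, 1)) (\<gamma> p)) - (cmul (\<beta> p) (Dd p (0, 1)) + cmul (Db p (0, 1)) (\<delta> p))) = 0"
      unfolding 1 by (simp add: cm.minus_left cm.minus_right algebra_simps)
  qed
qed

lemma star_rep: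
  assumes f: "slice_rep f \<alpha> \<beta>" and g: "slice_rep g \<gamma> \<delta>"
  shows "slice_rep (star f g) (\<lambda>p. cmul (\<alpha> p) (\<gamma> p) - cmul (\<beta> p) (\<delta> p)) (\<lambda>p. cmul (\<beta> p) (\<gamma> p) + cmul (\<alpha> p) (\<delta> p))"
proof -
  have "star f g = slice_fun (\<lambda>p. cmul (\<alpha> p) (\<gamma> p) - cmul (\<beta> p) (\<delta> p)) (\<lambda>p. cmul (\<beta> p) (\<gamma> p) + cmul (\<alpha> p) (\<delta> p))"
    unfolding star_def slice_comps_eq[OF f] slice_comps_eq[OF g] by simp
  moreover have "slice_rep (slice_fun (\<lambda>p. cmul (\<alpha> p) (\<gamma> p) - cmul (\<beta> p) (\<delta> p)) (\<lambda>p. cmul (\<beta> p) (\<gamma> p) + cmul (\<alpha> p) (\<delta> p)))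
       (\<lambda>p. cmul (\<alpha> p) (\<gamma> p) - cmul (\<beta> p) (\<delta> p)) (\<lambda>p. cmul (\<beta> p) (\<gamma> p) + cmul (\<alpha> p) (\<delta> p))"
  proof (rule slice_fun_rep)
    show "CR_ok (\<lambda>p. cmul (\<alpha> p) (\<gamma> p) - cmul (\<beta> p) (\<delta> p)) (\<lambda>p. cmul (\<beta> p) (\<gamma> p) + cmul (\<alpha> p) (\<delta> p))"
      using f g CR_ok_mul unfolding slice_rep_iff by blast
  qed (use f g in \<open>auto simp: slice_rep_iff cm.minus_left cm.minus_right\<close>)
  ultimately show ?thesis by simp
qed


fun PQ :: "(real \<times> real \<Rightarrow> 'n::{finite,linorder} clif) \<Rightarrow> (real \<times> real \<Rightarrow> 'n clif) \<Rightarrow> nat \<Rightarrow>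
   (real \<times> real \<Rightarrow> 'n clif) \<times> (real \<times> real \<Rightarrow> 'n clif)" where
  "PQ a b 0 = (\<lambda>p. cone, \<lambda>p. 0)"
| "PQ a b (Suc k) = (\<lambda>p. cmul (a p) (fst (PQ a b k) p) - cmul (b p) (snd (PQ a b k) p),
                     \<lambda>p. cmul (b p) (fst (PQ a b k) p) + cmul (a p) (snd (PQ a b k) p))"

lemma star_pow_rep:
  assumes "slice_rep f \<alpha> \<beta>"
  shows "slice_rep (star_pow f k) (fst (PQ \<alpha> \<beta> k)) (snd (PQ \<alpha> \<beta> k))"
proof (induction k)
  case 0 then show ?case using cone_rep by simp
next
  case (Suc k) then show ?case using star_rep[OF assms Suc] by simp
qed

lemma rep_slice_fun:
  fixes f :: "real \<times> (real^('n::{finite,linorder})) \<Rightarrow> 'n clif"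
  assumes "slice_rep f \<alpha> \<beta>"
  shows "f x = slice_fun \<alpha> \<beta> x"
proof -
  have r: "\<And>u v a. norm a = 1 \<Longrightarrow> f (u, v *\<^sub>R a) = \<alpha> (u, v) + cmul (omega a) (\<beta> (u, v))"
    and o: "\<And>u v. \<beta> (u, -v) = - \<beta> (u, v)"
    using assms unfolding slice_rep_def by auto
  obtain u w where x: "x = (u, w)" by (cases x)
  show ?thesis
  proof (cases "w = 0")
    case True
    fix i :: 'n
    have B0: "\<beta> (u, 0) = 0"
    proof -
      have h: "\<beta> (u, 0) = - \<beta> (u, 0)" using o[of u 0] by (metis minus_zero)
      have "\<beta> (u, 0) $ i = - (\<beta> (u, 0) $ i)" for i by (subst h) (simp only: vector_uminus_component minus_minus)
      then show ?thesis by (simp add: vec_eq_iff)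
    qed
    have "f (u, 0 *\<^sub>R axis i 1) = \<alpha> (u, 0) + cmul (omega (axis i 1)) (\<beta> (u, 0))" by (rule r) simp
    then show ?thesis using True x B0 by (simp add: slice_fun_def cm.zero_right)
  next
    case False
    have "f (u, norm w *\<^sub>R sgn w) = \<alpha> (u, norm w) + cmul (omega (sgn w)) (\<beta> (u, norm w))"
      by (rule r) (simp add: norm_sgn False)
    moreover have "norm w *\<^sub>R sgn w = w" using False by (simp add: sgn_div_norm)
    ultimately show ?thesis using x by (simp add: slice_fun_def)
  qed
qed

lemma CR_ok_cont: assumes "CR_ok A B" shows "continuous_on S A" "continuous_on S B"
proof -
  obtain DA DB where "\<And>p. (A has_derivative DA p) (at p) \<and> (B has_derivative DB p) (at p)"
    using assms unfolding CR_ok_def by blast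
  then show "continuous_on S A" "continuous_on S B"
    by (meson continuous_at_imp_continuous_on has_derivative_continuous)+
qed

lemma PQ_bound:
  fixes \<alpha> \<beta> :: "real \<times> real \<Rightarrow> 'n::{finite,linorder} clif"
  assumes rep: "slice_rep f \<alpha> \<beta>" and S: "compact S"
  shows "\<exists>c\<ge>0. \<forall>k. \<forall>p\<in>S. norm (fst (PQ \<alpha> \<beta> k) p) + norm (snd (PQ \<alpha> \<beta> k) p) \<le> norm (cone :: 'n clif) * c ^ k"
proof -
  have cr: "CR_ok \<alpha> \<beta>" using rep unfolding slice_rep_iff by blast
  have "compact (\<alpha> ` S)" "compact (\<beta> ` S)"
    using CR_ok_cont[OF cr] S compact_continuous_image by blast+
  then have "bounded (\<alpha> ` S)" "bounded (\<beta> ` S)" by (auto intro: compact_imp_bounded)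
  then obtain M1 M2 where "\<forall>y\<in>\<alpha> ` S. norm y \<le> M1" and "\<forall>y\<in>\<beta> ` S. norm y \<le> M2"
    unfolding bounded_iff by blast
  then have M1: "\<forall>p\<in>S. norm (\<alpha> p) \<le> M1" and M2: "\<forall>p\<in>S. norm (\<beta> p) \<le> M2" by auto
  define M where "M = max 0 (max M1 M2)"
  have M: "\<And>p. p \<in> S \<Longrightarrow> norm (\<alpha> p) \<le> M \<and> norm (\<beta> p) \<le> M" "M \<ge> 0"
    using M1 M2 unfolding M_def by force+
  obtain K where K: "\<And>a b :: 'n clif. norm (cmul a b) \<le> norm a * norm b * K" "K > 0"
    using cm.pos_bounded by blast
  have cm_le: "norm (cmul a b) \<le> M * norm b * K" if "norm a \<le> M" for a b :: "'n clif"
  proof -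
    have "norm a * norm b * K \<le> M * norm b * K"
      by (intro mult_right_mono) (use that K(2) in auto)
    then show ?thesis using K(1)[of a b] by linarith
  qed
  define c where "c = 2 * M * K"
  have "\<forall>p\<in>S. norm (fst (PQ \<alpha> \<beta> k) p) + norm (snd (PQ \<alpha> \<beta> k) p) \<le> norm (cone :: 'n clif) * c ^ k" for k
  proof (induction k)
    case 0 then show ?case by simp
  next
    case (Suc k)
    show ?case
    proof
      fix p assume p: "p \<in> S"
      let ?P = "fst (PQ \<alpha> \<beta> k) p" and ?Q = "snd (PQ \<alpha> \<beta> k) p"
      have "norm (fst (PQ \<alpha> \<beta> (Suc k)) p) + norm (snd (PQ \<alpha> \<beta> (Suc k)) p)
          \<le> (norm (cmul (\<alpha> p) ?P) + norm (cmul (\<beta> p) ?Q)) + (norm (cmul (\<beta> p) ?P) + norm (cmul (\<alpha> p) ?Q))"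
        unfolding PQ.simps fst_conv snd_conv by (intro add_mono norm_triangle_ineq4 norm_triangle_ineq)
      also have "\<dots> \<le> (M * norm ?P * K + M * norm ?Q * K) + (M * norm ?P * K + M * norm ?Q * K)"
        using cm_le M(1)[OF p] by (intro add_mono) auto
      also have "\<dots> = c * (norm ?P + norm ?Q)" unfolding c_def by (simp add: algebra_simps)
      also have "\<dots> \<le> c * (norm (cone :: 'n clif) * c ^ k)"
        using Suc p M(2) K(2) unfolding c_def by (intro mult_left_mono) auto
      finally show "norm (fst (PQ \<alpha> \<beta> (Suc k)) p) + norm (snd (PQ \<alpha> \<beta> (Suc k)) p) \<le> norm (cone :: 'n clif) * c ^ Suc k"
        by (simp add: algebra_simps)
    qed
  qed
  moreover have "c \<ge> 0" unfolding c_def using M(2) K(2) by simp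
  ultimately show ?thesis by blast
qed


lemma has_derivative_vecI:
  fixes f :: "'a::real_normed_vector \<Rightarrow> real^'m"
  assumes "\<And>i. ((\<lambda>x. f x $ i) has_derivative (\<lambda>h. f' h $ i)) (at a within S)"
  shows "(f has_derivative f') (at a within S)"
  by (subst has_derivative_componentwise_within)
     (auto simp: Basis_vec_def cart_eq_inner_axis[symmetric] assms)

lemma bl_ReIm: "bounded_linear (\<lambda>h::complex. (Re h, Im h))"
  by (intro bounded_linear_Pair bounded_linear_Re bounded_linear_Im)

lemma bl_Complex: "bounded_linear (\<lambda>p::real\<times>real. Complex (fst p) (snd p))"
proof -
  have "linear (\<lambda>p::real\<times>real. Complex (fst p) (snd p))"
    unfolding linear_iff by (simp add: complex_eq_iff)
  then show ?thesis using linear_conv_bounded_linear by blast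
qed

lemma CR_holo:
  fixes A B :: "real \<times> real \<Rightarrow> 'n::{finite,linorder} clif"
  assumes "CR_ok A B"
  shows "(\<lambda>z. Complex (A (Re z, Im z) $ C) (B (Re z, Im z) $ C)) holomorphic_on UNIV"
proof -
  obtain DA DB where ab: "\<And>p. (A has_derivative DA p) (at p) \<and> (B has_derivative DB p) (at p) \<and>
        DA p (1, 0) - DB p (0, 1) = 0 \<and> DB p (1, 0) + DA p (0, 1) = 0"
    using assms unfolding CR_ok_def by blast
  have "(\<lambda>z. Complex (A (Re z, Im z) $ C) (B (Re z, Im z) $ C)) field_differentiable (at z)" for z
  proof -
    define p where "p = (Re z, Im z)"
    have h1: "((\<lambda>z. (Re z, Im z)) has_derivative (\<lambda>h. (Re h, Im h))) (at z)"
      by (rule bounded_linear_imp_has_derivative[OF bl_ReIm])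
    have hA: "((\<lambda>z. A (Re z, Im z)) has_derivative (\<lambda>h. DA p (Re h, Im h))) (at z)"
      using diff_chain_at[OF h1, of A "DA p"] ab unfolding p_def o_def by auto
    have hB: "((\<lambda>z. B (Re z, Im z)) has_derivative (\<lambda>h. DB p (Re h, Im h))) (at z)"
      using diff_chain_at[OF h1, of B "DB p"] ab unfolding p_def o_def by auto
    have hA': "((\<lambda>z. A (Re z, Im z) $ C) has_derivative (\<lambda>h. DA p (Re h, Im h) $ C)) (at z)"
      by (rule bounded_linear.has_derivative[OF bounded_linear_vec_nth hA])
    have hB': "((\<lambda>z. B (Re z, Im z) $ C) has_derivative (\<lambda>h. DB p (Re h, Im h) $ C)) (at z)"
      by (rule bounded_linear.has_derivative[OF bounded_linear_vec_nth hB])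
    have hC: "((\<lambda>z. Complex (A (Re z, Im z) $ C) (B (Re z, Im z) $ C)) has_derivative
        (\<lambda>h. Complex (DA p (Re h, Im h) $ C) (DB p (Re h, Im h) $ C))) (at z)"
      using bounded_linear.has_derivative[OF bl_Complex has_derivative_Pair[OF hA' hB']] by simp
    have lA: "bounded_linear (DA p)" and lB: "bounded_linear (DB p)"
      using ab[of p] has_derivative_bounded_linear by blast+
    have dec: "(Re h, Im h) = Re h *\<^sub>R (1::real, 0::real) + Im h *\<^sub>R (0, 1)" for h by simp
    have eA: "DA p (Re h, Im h) = Re h *\<^sub>R DA p (1, 0) + Im h *\<^sub>R DA p (0, 1)" for h
      by (simp only: dec linear_add[OF bounded_linear.linear[OF lA]] linear_scale[OF bounded_linear.linear[OF lA]])
    have eB: "DB p (Re h, Im h) = Re h *\<^sub>R DB p (1, 0) + Im h *\<^sub>R DB p (0, 1)" for h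
      by (simp only: dec linear_add[OF bounded_linear.linear[OF lB]] linear_scale[OF bounded_linear.linear[OF lB]])
    have cr1: "DB p (0, 1) = DA p (1, 0)" and cr2: "DA p (0, 1) = - DB p (1, 0)"
      using ab[of p] by (auto simp: eq_neg_iff_add_eq_0 add.commute)
    define d where "d = Complex (DA p (1, 0) $ C) (DB p (1, 0) $ C)"
    have deq: "(\<lambda>h. Complex (DA p (Re h, Im h) $ C) (DB p (Re h, Im h) $ C)) = (*) d"
      unfolding eA eB cr1 cr2 d_def by (auto simp: complex_eq_iff algebra_simps)
    have "((\<lambda>z. Complex (A (Re z, Im z) $ C) (B (Re z, Im z) $ C)) has_field_derivative d) (at z)"
      using hC unfolding deq has_field_derivative_def .
    then show ?thesis unfolding field_differentiable_def by blast
  qed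
  then show ?thesis unfolding holomorphic_on_def by (simp add: field_differentiable_at_within)
qed

lemma holo_CR:
  fixes E :: "'n::{finite,linorder} set \<Rightarrow> complex \<Rightarrow> complex"
  assumes "\<And>C. E C holomorphic_on UNIV"
  shows "CR_ok (\<lambda>p. \<chi> C. Re (E C (Complex (fst p) (snd p)))) (\<lambda>p. \<chi> C. Im (E C (Complex (fst p) (snd p))))"
proof -
  have hd: "(E C has_field_derivative deriv (E C) z) (at z)" for C z
    using assms[of C] by (simp add: DERIV_deriv_iff_field_differentiable holomorphic_on_def field_differentiable_at_within)
  define DP where "DP = (\<lambda>p h. \<chi> C. Re (deriv (E C) (Complex (fst p) (snd p)) * Complex (fst h) (snd h)))"
  define DQ where "DQ = (\<lambda>p h. \<chi> C. Im (deriv (E C) (Complex (fst p) (snd p)) * Complex (fst h) (snd h)))"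
  have hc: "((\<lambda>p. E C (Complex (fst p) (snd p))) has_derivative
      (\<lambda>h. deriv (E C) (Complex (fst p) (snd p)) * Complex (fst h) (snd h))) (at p)" for C and p :: "real \<times> real"
  proof -
    have 1: "((\<lambda>p. Complex (fst p) (snd p)) has_derivative (\<lambda>p. Complex (fst p) (snd p))) (at p)"
      by (rule bounded_linear_imp_has_derivative[OF bl_Complex])
    show ?thesis using diff_chain_at[OF 1 hd[of C, unfolded has_field_derivative_def]] by (simp add: o_def)
  qed
  show ?thesis unfolding CR_ok_def
  proof (intro exI allI conjI)
    fix p :: "real \<times> real"
    show "((\<lambda>p. \<chi> C. Re (E C (Complex (fst p) (snd p)))) has_derivative DP p) (at p)"
      unfolding DP_def
      by (rule has_derivative_vecI, unfold vec_lambda_beta, rule bounded_linear.has_derivative[OF bounded_linear_Re hc])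
    show "((\<lambda>p. \<chi> C. Im (E C (Complex (fst p) (snd p)))) has_derivative DQ p) (at p)"
      unfolding DQ_def
      by (rule has_derivative_vecI, unfold vec_lambda_beta, rule bounded_linear.has_derivative[OF bounded_linear_Im hc])
    show "DP p (1, 0) - DQ p (0, 1) = 0" unfolding DP_def DQ_def by (simp add: vec_eq_iff)
    show "DQ p (1, 0) + DP p (0, 1) = 0" unfolding DP_def DQ_def by (simp add: vec_eq_iff)
  qed
qed


lemma Re_div_fact: "Re (z / fact k) = Re z / fact k"
  by (metis Re_divide_of_real of_real_fact)
lemma Im_div_fact: "Im (z / fact k) = Im z / fact k"
  by (metis Im_divide_of_real of_real_fact)

theorem mainTheorem1:
  fixes f :: "real \<times> (real ^ ('n::{finite,linorder})) \<Rightarrow> 'n::{finite,linorder} clif"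
  assumes "slice_monogenic f"
  shows "\<exists>g. (\<forall>K. compact K \<longrightarrow>
              uniform_limit K (\<lambda>m x. \<Sum>k<m. (1 / fact k) *\<^sub>R star_pow f k x) g sequentially)
           \<and> slice_monogenic g"
proof -
  obtain \<alpha> \<beta> where rep: "slice_rep f \<alpha> \<beta>" using assms unfolding slice_monogenic_def by blast
  define P where "P k = fst (PQ \<alpha> \<beta> k)" for k
  define Q where "Q k = snd (PQ \<alpha> \<beta> k)" for k
  define nc where "nc = norm (cone :: 'n clif)"
  have repk: "slice_rep (star_pow f k) (P k) (Q k)" for k
    unfolding P_def Q_def by (rule star_pow_rep[OF rep])
  have spk: "star_pow f k x = P k (fst x, norm (snd x)) + cmul (omega (sgn (snd x))) (Q k (fst x, norm (snd x)))" for k x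
    using rep_slice_fun[OF repk[of k], of x] by (simp add: slice_fun_def)
  obtain Kc where Kc: "\<And>a b :: 'n clif. norm (cmul a b) \<le> norm a * norm b * Kc" "Kc > 0"
    using cm.pos_bounded by blast
  have blo: "bounded_linear (omega :: real^('n::{finite,linorder}) \<Rightarrow> 'n clif)"
    using linear_omega linear_conv_bounded_linear by blast
  obtain W where W: "\<And>a :: real^('n::{finite,linorder}). norm (omega a) \<le> norm a * W" "W > 0"
    using bounded_linear.pos_bounded[OF blo] by blast
  have Wsgn: "norm (omega (sgn (a :: real^('n::{finite,linorder})))) \<le> W" for a
  proof -
    have "norm (omega (sgn a)) \<le> norm (sgn a) * W" by (rule W(1))
    also have "\<dots> \<le> 1 * W" using W(2) by (intro mult_right_mono) (auto simp: norm_sgn)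
    finally show ?thesis by simp
  qed
  have bnd_PQ: "\<exists>c\<ge>0. \<forall>k. \<forall>p\<in>T. norm (P k p) + norm (Q k p) \<le> nc * c ^ k" if "compact T" for T
    using PQ_bound[OF rep that] unfolding P_def Q_def nc_def by blast
  have sp_le: "norm (star_pow f k x) \<le> (1 + W * Kc) * (norm (P k (fst x, norm (snd x))) + norm (Q k (fst x, norm (snd x))))" for k x
  proof -
    let ?p = "(fst x, norm (snd x))"
    have "norm (star_pow f k x) \<le> norm (P k ?p) + norm (cmul (omega (sgn (snd x))) (Q k ?p))"
      unfolding spk by (rule norm_triangle_ineq)
    also have "norm (cmul (omega (sgn (snd x))) (Q k ?p)) \<le> W * norm (Q k ?p) * Kc"
    proof -
      have "norm (cmul (omega (sgn (snd x))) (Q k ?p)) \<le> norm (omega (sgn (snd x))) * norm (Q k ?p) * Kc" by (rule Kc(1))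
      also have "\<dots> \<le> W * norm (Q k ?p) * Kc"
        using Wsgn Kc(2) by (intro mult_right_mono) auto
      finally show ?thesis .
    qed
    finally show ?thesis using W(2) Kc(2)
      by (simp add: algebra_simps) (smt (verit) mult_nonneg_nonneg norm_ge_zero)
  qed
  have summ: "summable (\<lambda>k. B * c ^ k / fact k)" for B c :: real
    using summable_mult[OF summable_exp[of c], of B] by (simp add: field_simps)
  define g where "g x = (\<Sum>k. (1 / fact k) *\<^sub>R star_pow f k x)" for x
  have ulim: "uniform_limit S (\<lambda>m x. \<Sum>k<m. (1 / fact k) *\<^sub>R star_pow f k x) g sequentially"
    if S: "compact S" for S
  proof -
    have cS: "compact ((\<lambda>x. (fst x, norm (snd x))) ` S)"
      by (intro compact_continuous_image S continuous_intros)
    obtain c where c: "c \<ge> 0" "\<And>k p. p \<in> (\<lambda>x. (fst x, norm (snd x))) ` S \<Longrightarrow> norm (P k p) + norm (Q k p) \<le> nc * c ^ k"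
      using bnd_PQ[OF cS] by blast
    have "uniform_limit S (\<lambda>m x. \<Sum>k<m. (1 / fact k) *\<^sub>R star_pow f k x) (\<lambda>x. \<Sum>k. (1 / fact k) *\<^sub>R star_pow f k x) sequentially"
    proof (rule Weierstrass_m_test)
      show "summable (\<lambda>k. (1 + W * Kc) * nc * c ^ k / fact k)" by (rule summ)
      fix k x assume x: "x \<in> S"
      have "norm ((1 / fact k) *\<^sub>R star_pow f k x) = norm (star_pow f k x) / fact k" by simp
      also have "\<dots> \<le> (1 + W * Kc) * (nc * c ^ k) / fact k"
      proof (rule divide_right_mono)
        have "(1 + W * Kc) * (norm (P k (fst x, norm (snd x))) + norm (Q k (fst x, norm (snd x)))) \<le> (1 + W * Kc) * (nc * c ^ k)"
          using c(2)[of "(fst x, norm (snd x))" k] x W(2) Kc(2) by (intro mult_left_mono) auto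
        then show "norm (star_pow f k x) \<le> (1 + W * Kc) * (nc * c ^ k)" using sp_le[of k x] by linarith
      qed simp
      finally show "norm ((1 / fact k) *\<^sub>R star_pow f k x) \<le> (1 + W * Kc) * nc * c ^ k / fact k"
        by (simp add: algebra_simps)
    qed
    then show ?thesis unfolding g_def .
  qed
  define PE where "PE p = (\<Sum>k. (1 / fact k) *\<^sub>R P k p)" for p
  define QE where "QE p = (\<Sum>k. (1 / fact k) *\<^sub>R Q k p)" for p
  have sumPQ: "summable (\<lambda>k. (1 / fact k) *\<^sub>R P k p) \<and> summable (\<lambda>k. (1 / fact k) *\<^sub>R Q k p)" for p
  proof -
    obtain c where c0: "c \<ge> 0" "\<forall>k. \<forall>q\<in>{p}. norm (P k q) + norm (Q k q) \<le> nc * c ^ k"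
      using bnd_PQ[OF compact_sing] by blast
    then have c: "c \<ge> 0" "\<And>k. norm (P k p) + norm (Q k p) \<le> nc * c ^ k" by auto
    have cP: "norm (P k p) \<le> nc * c ^ k" and cQ: "norm (Q k p) \<le> nc * c ^ k" for k
      using c(2)[of k] norm_ge_zero[of "P k p"] norm_ge_zero[of "Q k p"] by linarith+
    have "summable (\<lambda>k. (1 / fact k) *\<^sub>R P k p)"
      by (rule summable_comparison_test'[OF summ[of nc c], of 0]) (simp add: divide_right_mono cP)
    moreover have "summable (\<lambda>k. (1 / fact k) *\<^sub>R Q k p)"
      by (rule summable_comparison_test'[OF summ[of nc c], of 0]) (simp add: divide_right_mono cQ)
    ultimately show ?thesis by blast
  qed
  have gE: "g = slice_fun PE QE"
  proof
    fix x :: "real \<times> (real^('n::{finite,linorder}))"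
    let ?p = "(fst x, norm (snd x))" and ?w = "omega (sgn (snd x))"
    have "(\<lambda>k. (1 / fact k) *\<^sub>R P k ?p + cmul ?w ((1 / fact k) *\<^sub>R Q k ?p)) sums (PE ?p + cmul ?w (QE ?p))"
      unfolding PE_def QE_def
      by (intro sums_add summable_sums bounded_linear.sums[OF cm.bounded_linear_right]) (use sumPQ in auto)
    moreover have "(\<lambda>k. (1 / fact k) *\<^sub>R P k ?p + cmul ?w ((1 / fact k) *\<^sub>R Q k ?p)) = (\<lambda>k. (1 / fact k) *\<^sub>R star_pow f k x)"
      by (simp add: spk scaleR_add_right cm.scaleR_right)
    ultimately show "g x = slice_fun PE QE x"
      unfolding g_def slice_fun_def by (simp add: sums_iff)
  qed
  have ev: "PE (u, -v) = PE (u, v)" for u v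
    unfolding PE_def using repk by (simp add: slice_rep_iff)
  have od: "QE (u, -v) = - QE (u, v)" for u v
  proof -
    have "QE (u, -v) = (\<Sum>k. - ((1 / fact k) *\<^sub>R Q k (u, v)))"
      unfolding QE_def using repk by (simp add: slice_rep_iff)
    also have "\<dots> = - QE (u, v)" unfolding QE_def using sumPQ by (intro suminf_minus) blast
    finally show ?thesis .
  qed
  define E where "E C z = (\<Sum>k. complex_of_real (1 / fact k) * Complex (P k (Re z, Im z) $ C) (Q k (Re z, Im z) $ C))" for C z
  have holE: "E C holomorphic_on UNIV" for C
  proof (rule holomorphic_uniform_sequence[where f="\<lambda>m z. \<Sum>k<m. complex_of_real (1 / fact k) * Complex (P k (Re z, Im z) $ C) (Q k (Re z, Im z) $ C)"])
    fix m
    have "CR_ok (P k) (Q k)" for k using repk[of k] unfolding slice_rep_iff by blast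
    then show "(\<lambda>z. \<Sum>k<m. complex_of_real (1 / fact k) * Complex (P k (Re z, Im z) $ C) (Q k (Re z, Im z) $ C)) holomorphic_on UNIV"
      by (intro holomorphic_on_sum holomorphic_on_mult holomorphic_on_const CR_holo)
  next
    fix z :: complex
    have cS: "compact ((\<lambda>z. (Re z, Im z)) ` cball z 1)"
      by (intro compact_continuous_image compact_cball continuous_intros)
    obtain c where c: "c \<ge> 0" "\<And>k p. p \<in> (\<lambda>z. (Re z, Im z)) ` cball z 1 \<Longrightarrow> norm (P k p) + norm (Q k p) \<le> nc * c ^ k"
      using bnd_PQ[OF cS] by blast
    have "uniform_limit (cball z 1) (\<lambda>m z. \<Sum>k<m. complex_of_real (1 / fact k) * Complex (P k (Re z, Im z) $ C) (Q k (Re z, Im z) $ C)) (E C) sequentially"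
      unfolding E_def
    proof (rule Weierstrass_m_test)
      show "summable (\<lambda>k. nc * c ^ k / fact k)" by (rule summ)
      fix k y assume y: "y \<in> cball z 1"
      let ?p = "(Re y, Im y)"
      have "norm (complex_of_real (1 / fact k) * Complex (P k ?p $ C) (Q k ?p $ C)) = cmod (Complex (P k ?p $ C) (Q k ?p $ C)) / fact k"
        by (simp add: norm_mult norm_divide)
      also have "\<dots> \<le> (norm (P k ?p) + norm (Q k ?p)) / fact k"
      proof (intro divide_right_mono)
        have "cmod (Complex (P k ?p $ C) (Q k ?p $ C)) \<le> \<bar>P k ?p $ C\<bar> + \<bar>Q k ?p $ C\<bar>"
          using cmod_le[of "Complex (P k ?p $ C) (Q k ?p $ C)"] by simp
        also have "\<dots> \<le> norm (P k ?p) + norm (Q k ?p)"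
          by (intro add_mono component_le_norm_cart)
        finally show "cmod (Complex (P k ?p $ C) (Q k ?p $ C)) \<le> norm (P k ?p) + norm (Q k ?p)" .
      qed simp
      also have "\<dots> \<le> nc * c ^ k / fact k"
        using c(2)[of ?p k] y by (intro divide_right_mono) auto
      finally show "norm (complex_of_real (1 / fact k) * Complex (P k ?p $ C) (Q k ?p $ C)) \<le> nc * c ^ k / fact k" .
    qed
    then show "\<exists>d>0. cball z d \<subseteq> UNIV \<and> uniform_limit (cball z d) (\<lambda>m z. \<Sum>k<m. complex_of_real (1 / fact k) * Complex (P k (Re z, Im z) $ C) (Q k (Re z, Im z) $ C)) (E C) sequentially"
      by (intro exI[of _ 1]) auto
  qed simp
  have EPQ: "E C (Complex (fst p) (snd p)) = Complex (PE p $ C) (QE p $ C)" for C p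
  proof -
    have "(\<lambda>k. ((1 / fact k) *\<^sub>R P k p) $ C) sums (PE p $ C)"
      unfolding PE_def by (intro sums_vec_nth summable_sums) (use sumPQ in blast)
    moreover have "(\<lambda>k. ((1 / fact k) *\<^sub>R Q k p) $ C) sums (QE p $ C)"
      unfolding QE_def by (intro sums_vec_nth summable_sums) (use sumPQ in blast)
    ultimately have "(\<lambda>k. complex_of_real (1 / fact k) * Complex (P k p $ C) (Q k p $ C)) sums Complex (PE p $ C) (QE p $ C)"
      unfolding sums_complex_iff by (simp add: Re_div_fact Im_div_fact)
    then show ?thesis unfolding E_def by (simp add: sums_iff)
  qed
  have "CR_ok (\<lambda>p. \<chi> C. Re (E C (Complex (fst p) (snd p)))) (\<lambda>p. \<chi> C. Im (E C (Complex (fst p) (snd p))))"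
    by (rule holo_CR[OF holE])
  moreover have "(\<lambda>p. \<chi> C. Re (E C (Complex (fst p) (snd p)))) = PE" "(\<lambda>p. \<chi> C. Im (E C (Complex (fst p) (snd p)))) = QE"
    by (auto simp: EPQ vec_eq_iff)
  ultimately have "CR_ok PE QE" by simp
  then have "slice_rep (slice_fun PE QE) PE QE" using ev od by (intro slice_fun_rep) auto
  then have "slice_monogenic g" unfolding gE slice_monogenic_def by blast
  then show ?thesis using ulim by blast
qed

end
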